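(* Let $S\subset\mathbb{R}^2$ be a finite set of points in general position, let $f:\mathbb{R}^2\times[0,1]\to\mathbb{R}^2$ be an ambient isotopy, and let $S(t)=\{f(s,t): s\in S\}$ for $t\in[0,1]$. Suppose there is $t_0\in(0,1]$ such that $S(t)$ is in general position for all $t\in[0,t_0)$, and such that in $S(t_0)$ the triple $\{f(a,t_0),f(b,t_0),f(c,t_0)\}$ for distinct $a,b,c\in S$ is collinear and is the only collinear triple. If $f(c,t_0)$ lies on the segment between $f(a,t_0)$ and $f(b,t_0)$, then $ab$ is an exit edge of $S=S(0)$ with witness $c$.
   Context: General position: no three points collinear. An ambient isotopy of $\mathbb{R}^2$ is a continuous map $f:\mathbb{R}^2\times[0,1]\to\mathbb{R}^2$ such that $f(\cdot,t)$ is a homeomorphism for every $t$ and $f(\cdot,0)$ is the identity. For distinct $a,b,c\in S$, the segment $ab$ is an exit edge of $S$ with witness $c$ if there is no $p\in S$ such that the line through $a$ and $p$ strictly separates $b$ from $c$, and there is no $p\in S$ such that the line through $b$ and $p$ strictly separates $a$ from $c$. *)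

theory Defs
  imports "HOL-Analysis.Analysis"
begin

definition general_position :: "(real^2) set \<Rightarrow> bool" where
  "general_position S \<longleftrightarrow>
     (\<forall>x\<in>S. \<forall>y\<in>S. \<forall>z\<in>S. x \<noteq> y \<and> y \<noteq> z \<and> x \<noteq> z \<longrightarrow> \<not> collinear {x, y, z})"

definition ambient_isotopy :: "((real^2) \<times> real \<Rightarrow> real^2) \<Rightarrow> bool" where
  "ambient_isotopy f \<longleftrightarrow>
     continuous_on (UNIV \<times> {0..1}) f \<and>
     (\<forall>t\<in>{0..1}. \<exists>g. homeomorphism UNIV UNIV (\<lambda>x. f (x, t)) g) \<and>
     (\<forall>x. f (x, 0) = x)"

definition orient :: "real^2 \<Rightarrow> real^2 \<Rightarrow> real^2 \<Rightarrow> real" where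
  "orient p q r = (q$1 - p$1) * (r$2 - p$2) - (q$2 - p$2) * (r$1 - p$1)"

definition line_strictly_separates :: "real^2 \<Rightarrow> real^2 \<Rightarrow> real^2 \<Rightarrow> real^2 \<Rightarrow> bool" where
  "line_strictly_separates a p x y \<longleftrightarrow> a \<noteq> p \<and> orient a p x * orient a p y < 0"

definition exit_edge :: "(real^2) set \<Rightarrow> real^2 \<Rightarrow> real^2 \<Rightarrow> real^2 \<Rightarrow> bool" where
  "exit_edge S a b c \<longleftrightarrow>
     a \<in> S \<and> b \<in> S \<and> c \<in> S \<and> a \<noteq> b \<and> b \<noteq> c \<and> a \<noteq> c \<and>
     \<not> (\<exists>p\<in>S. line_strictly_separates a p b c) \<and>
     \<not> (\<exists>p\<in>S. line_strictly_separates b p a c)"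

end

theory Submission
  imports Defs
begin

lemma orient_zero_collinear:
  fixes x y z :: "real^2"
  assumes "orient x y z = 0"
  shows "collinear {x, y, z}"
proof (cases "x = y")
  case True
  then show ?thesis by (simp add: collinear_2)
next
  case False
  define d where "d = y - x"
  have d0: "d $ 1 \<noteq> 0 \<or> d $ 2 \<noteq> 0"
    using False unfolding d_def by (auto simp: vec_eq_iff forall_2)
  have o: "(z$2 - x$2) * d$1 = (z$1 - x$1) * d$2"
    using assms unfolding orient_def d_def by (simp add: algebra_simps)
  obtain k where k: "z - x = k *\<^sub>R d"
  proof (cases "d $ 1 = 0")
    case True
    with d0 have "d$2 \<noteq> 0" by auto
    show ?thesis
      apply (rule that[of "(z$2 - x$2) / d$2"])
      using True o \<open>d$2 \<noteq> 0\<close> by (auto simp: vec_eq_iff forall_2 field_simps)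
  next
    case False
    show ?thesis
      apply (rule that[of "(z$1 - x$1) / d$1"])
      using False o by (auto simp: vec_eq_iff forall_2 field_simps)
  qed
  have "z = (1 - k) *\<^sub>R x + (1 - (1 - k)) *\<^sub>R y"
    using k unfolding d_def by (simp add: algebra_simps)
  then have "collinear {x, z, y}" unfolding collinear_3_expand by blast
  then show ?thesis by (simp add: insert_commute)
qed

lemma orient_segment:
  fixes a b c p :: "real^2"
  assumes "c \<in> closed_segment a b"
  obtains u where "0 \<le> u" "orient a p c = u * orient a p b"
proof -
  obtain u where u: "0 \<le> u" "u \<le> 1" "c = (1 - u) *\<^sub>R a + u *\<^sub>R b"
    using assms unfolding closed_segment_def by auto
  have "orient a p c = u * orient a p b"
    unfolding u(3) orient_def by (simp add: algebra_simps)
  with u show ?thesis using that by blast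
qed

lemma main:
  fixes S :: "(real^2) set" and f :: "(real^2) \<times> real \<Rightarrow> real^2"
    and a b c :: "real^2" and t0 :: real
  assumes "ambient_isotopy f"
    and "0 < t0" and "t0 \<le> 1"
    and gp: "\<forall>t\<in>{0..<t0}. general_position ((\<lambda>s. f (s, t)) ` S)"
    and "a \<in> S" and "b \<in> S" and "c \<in> S"
    and "a \<noteq> b" and "b \<noteq> c" and "a \<noteq> c"
    and uniq: "\<forall>x\<in>(\<lambda>s. f (s, t0)) ` S. \<forall>y\<in>(\<lambda>s. f (s, t0)) ` S. \<forall>z\<in>(\<lambda>s. f (s, t0)) ` S.
           x \<noteq> y \<and> y \<noteq> z \<and> x \<noteq> z \<and> collinear {x, y, z} \<longrightarrow>
           {x, y, z} = {f (a, t0), f (b, t0), f (c, t0)}"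
    and seg: "f (c, t0) \<in> closed_segment (f (a, t0)) (f (b, t0))"
  shows "\<not> (\<exists>p\<in>S. line_strictly_separates a p b c)"
proof
  assume "\<exists>p\<in>S. line_strictly_separates a p b c"
  then obtain p where pS: "p \<in> S" and sep: "a \<noteq> p" "orient a p b * orient a p c < 0"
    unfolding line_strictly_separates_def by auto
  have pb: "p \<noteq> b" using sep(2) by (auto simp: orient_def)
  have pc: "p \<noteq> c" using sep(2) by (auto simp: orient_def)
  have cont: "continuous_on (UNIV \<times> {0..1}) f" and hom: "\<And>t. t \<in> {0..1} \<Longrightarrow> \<exists>g. homeomorphism UNIV UNIV (\<lambda>x. f (x, t)) g"
    and id0: "\<And>x. f (x, 0) = x"
    using assms(1) unfolding ambient_isotopy_def by auto
  have inj: "f (x, t) \<noteq> f (y, t)" if tt: "t \<in> {0..1}" and xy: "x \<noteq> y" for x y t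
  proof -
    obtain g where "homeomorphism UNIV UNIV (\<lambda>x. f (x, t)) g" using hom tt by blast
    then have "g (f (x, t)) = x" "g (f (y,t)) = y" unfolding homeomorphism_def by auto
    with xy show ?thesis by metis
  qed
  have ct: "continuous_on {0..t0} (\<lambda>t. f (x, t))" for x
    by (rule continuous_on_compose2[OF cont]) (use \<open>t0 \<le> 1\<close> in \<open>auto intro!: continuous_intros\<close>)
  define G where "G t = orient (f (a, t)) (f (p, t)) (f (b, t)) * orient (f (a, t)) (f (p, t)) (f (c, t))" for t
  have cG: "continuous_on {0..t0} G"
    unfolding G_def orient_def by (intro continuous_intros ct)
  have G0: "G 0 < 0" using sep by (simp add: G_def id0)
  have t01: "t0 \<in> {0..1}" using assms by auto
  have fS: "f (s, t0) \<in> (\<lambda>s. f (s, t0)) ` S" if "s \<in> S" for s using that by auto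
  have nc: "\<not> collinear {f (a, t0), f (p, t0), f (q, t0)}" if "q \<in> {b, c}" for q
  proof
    assume col: "collinear {f (a, t0), f (p, t0), f (q, t0)}"
    have qS: "q \<in> S" "q \<noteq> a" "q \<noteq> p" using that assms pb pc by auto
    have "{f (a, t0), f (p, t0), f (q, t0)} = {f (a, t0), f (b, t0), f (c, t0)}"
    proof -
      have d: "f (a, t0) \<noteq> f (p, t0)" "f (p, t0) \<noteq> f (q, t0)" "f (a, t0) \<noteq> f (q, t0)"
        using inj[OF t01] sep(1) qS by auto
      show ?thesis
        using uniq[rule_format, OF fS[OF \<open>a \<in> S\<close>] fS[OF pS] fS[OF qS(1)]] d col by blast
    qed
    then have "f (p, t0) \<in> {f (a, t0), f (b, t0), f (c, t0)}" by blast
    then show False using inj[OF t01] sep(1) pb pc by auto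
  qed
  have ob: "orient (f (a, t0)) (f (p, t0)) (f (b, t0)) \<noteq> 0"
    using nc[of b] orient_zero_collinear by auto
  have oc: "orient (f (a, t0)) (f (p, t0)) (f (c, t0)) \<noteq> 0"
    using nc[of c] orient_zero_collinear by auto
  obtain u where u: "0 \<le> u" "orient (f (a, t0)) (f (p, t0)) (f (c, t0)) = u * orient (f (a, t0)) (f (p, t0)) (f (b, t0))"
    using orient_segment[OF seg] by blast
  have "u \<noteq> 0" using u oc by auto
  then have up: "u > 0" using u(1) by simp
  have "G t0 = u * (orient (f (a, t0)) (f (p, t0)) (f (b, t0)))\<^sup>2"
    unfolding G_def u(2) by (simp add: power2_eq_square)
  moreover have "(orient (f (a, t0)) (f (p, t0)) (f (b, t0)))\<^sup>2 > 0" using ob by simp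
  ultimately have Gt0: "G t0 > 0" using up by simp
  obtain t where t: "0 \<le> t" "t \<le> t0" "G t = 0"
    using IVT'[of G 0 0 t0] G0 Gt0 cG \<open>0 < t0\<close> by auto
  have "t \<noteq> t0" using t Gt0 by auto
  with t have tin: "t \<in> {0..<t0}" "t \<in> {0..1}" using assms by auto
  have gpt: "general_position ((\<lambda>s. f (s, t)) ` S)" using gp tin by auto
  from t(3) have "orient (f (a, t)) (f (p, t)) (f (b, t)) = 0 \<or> orient (f (a, t)) (f (p, t)) (f (c, t)) = 0"
    unfolding G_def by auto
  then obtain q where q: "q \<in> {b, c}" "collinear {f (a, t), f (p, t), f (q, t)}"
    using orient_zero_collinear by blast
  have "q \<in> S" "q \<noteq> a" "q \<noteq> p" using q assms pb pc by auto
  then have d: "f (a, t) \<noteq> f (p, t)" "f (p, t) \<noteq> f (q, t)" "f (a, t) \<noteq> f (q, t)"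
    using inj[OF tin(2)] sep(1) by auto
  have m: "f (s, t) \<in> (\<lambda>s. f (s, t)) ` S" if "s \<in> S" for s using that by blast
  show False
    using gpt[unfolded general_position_def, rule_format, OF m[OF \<open>a \<in> S\<close>] m[OF pS] m[OF \<open>q \<in> S\<close>]] d q(2)
    by blast
qed

theorem proposition2:
  fixes S :: "(real^2) set" and f :: "(real^2) \<times> real \<Rightarrow> real^2"
    and a b c :: "real^2" and t0 :: real
  assumes "finite S" and "general_position S"
    and "ambient_isotopy f"
    and "0 < t0" and "t0 \<le> 1"
    and "\<forall>t\<in>{0..<t0}. general_position ((\<lambda>s. f (s, t)) ` S)"
    and "a \<in> S" and "b \<in> S" and "c \<in> S"
    and "a \<noteq> b" and "b \<noteq> c" and "a \<noteq> c"
    and "collinear {f (a, t0), f (b, t0), f (c, t0)}"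
    and "\<forall>x\<in>(\<lambda>s. f (s, t0)) ` S. \<forall>y\<in>(\<lambda>s. f (s, t0)) ` S. \<forall>z\<in>(\<lambda>s. f (s, t0)) ` S.
           x \<noteq> y \<and> y \<noteq> z \<and> x \<noteq> z \<and> collinear {x, y, z} \<longrightarrow>
           {x, y, z} = {f (a, t0), f (b, t0), f (c, t0)}"
    and "f (c, t0) \<in> closed_segment (f (a, t0)) (f (b, t0))"
  shows "exit_edge S a b c"
proof -
  have 1: "\<not> (\<exists>p\<in>S. line_strictly_separates a p b c)"
    by (rule main[OF assms(3-12) assms(14-15)])
  have e: "{f (a, t0), f (b, t0), f (c, t0)} = {f (b, t0), f (a, t0), f (c, t0)}" by auto
  have 2: "\<not> (\<exists>p\<in>S. line_strictly_separates b p a c)"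
    apply (rule main[of f t0 S b a c])
    using assms(3-12) apply simp_all
    using assms(14) unfolding e apply simp
    using assms(15) closed_segment_commute by metis
  show ?thesis unfolding exit_edge_def using 1 2 assms by auto
qed

end
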